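(* Let $\mathcal{C}$ be a linear $[n,n-r]_q$ code with full-rank parity-check matrix $H\in\mathbb{F}_q^{r\times n}$, and let $b\ge 2$. (a) If every $z\in\mathbb{F}_q^r$ is a linear combination of $b$ cyclically consecutive columns of $H$ (i.e. $\mathcal{C}$ is $b$-burst-covering with bursts considered cyclically), then \[ n\ge \frac{q^{r-b+1}-1}{q-1}+1. \] (b) If every $z\in\mathbb{F}_q^r$ is a linear combination of columns $h_i,\dots,h_{i+b-1}$ of $H$ for some $0\le i\le n-b$ (bursts considered non-cyclically), then \[ n\ge \frac{q^{r-b+1}-1}{q-1}+b-1, \] with equality if and only if every non-zero vector of $\mathbb{F}_q^r$ occurs exactly once as a $b$-burst linear combination of columns of $H$, i.e. equals $Hc$ for exactly one non-zero $c\in\mathbb{F}_q^n$ whose support lies in $\{i,\dots,i+b-1\}$ for some $0\le i\le n-b$.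
   Context: $h_0,\dots,h_{n-1}$ denote the columns of $H$; in (a) column indices are taken modulo $n$. $\mathcal{C}=\ker H$. *)

theory Defs
  imports Complex_Main
begin

text \<open>Vectors of F_q^m are functions nat => 'a vanishing outside {0..<m};
an r x n matrix H is a function nat => nat => 'a, H i j the entry in row i, column j
(only i < r, j < n are relevant).\<close>

definition is_vec :: "nat \<Rightarrow> (nat \<Rightarrow> 'a::zero) \<Rightarrow> bool" where
  "is_vec m z \<longleftrightarrow> (\<forall>i\<ge>m. z i = 0)"

definition matvec :: "nat \<Rightarrow> nat \<Rightarrow> (nat \<Rightarrow> nat \<Rightarrow> 'a::comm_semiring_1) \<Rightarrow> (nat \<Rightarrow> 'a) \<Rightarrow> (nat \<Rightarrow> 'a)" where
  "matvec r n H c = (\<lambda>i. if i < r then (\<Sum>j<n. H i j * c j) else 0)"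

definition full_rank :: "nat \<Rightarrow> nat \<Rightarrow> (nat \<Rightarrow> nat \<Rightarrow> 'a::comm_semiring_1) \<Rightarrow> bool" where
  "full_rank r n H \<longleftrightarrow> (\<forall>z. is_vec r z \<longrightarrow> (\<exists>c. is_vec n c \<and> matvec r n H c = z))"

definition code :: "nat \<Rightarrow> nat \<Rightarrow> (nat \<Rightarrow> nat \<Rightarrow> 'a::comm_semiring_1) \<Rightarrow> (nat \<Rightarrow> 'a) set" where
  "code r n H = {c. is_vec n c \<and> matvec r n H c = (\<lambda>_. 0)}"

definition cyc_burst :: "nat \<Rightarrow> nat \<Rightarrow> (nat \<Rightarrow> 'a::zero) \<Rightarrow> bool" where
  "cyc_burst n b c \<longleftrightarrow> (\<exists>i<n. \<forall>j. c j \<noteq> 0 \<longrightarrow> (\<exists>k<b. j = (i + k) mod n))"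

definition lin_burst :: "nat \<Rightarrow> nat \<Rightarrow> (nat \<Rightarrow> 'a::zero) \<Rightarrow> bool" where
  "lin_burst n b c \<longleftrightarrow> (\<exists>i. i + b \<le> n \<and> (\<forall>j. c j \<noteq> 0 \<longrightarrow> i \<le> j \<and> j < i + b))"

definition cyc_burst_covering :: "nat \<Rightarrow> nat \<Rightarrow> nat \<Rightarrow> (nat \<Rightarrow> nat \<Rightarrow> 'a::comm_semiring_1) \<Rightarrow> bool" where
  "cyc_burst_covering r n b H \<longleftrightarrow>
     (\<forall>z. is_vec r z \<longrightarrow> (\<exists>c. cyc_burst n b c \<and> matvec r n H c = z))"

definition lin_burst_covering :: "nat \<Rightarrow> nat \<Rightarrow> nat \<Rightarrow> (nat \<Rightarrow> nat \<Rightarrow> 'a::comm_semiring_1) \<Rightarrow> bool" where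
  "lin_burst_covering r n b H \<longleftrightarrow>
     (\<forall>z. is_vec r z \<longrightarrow> (\<exists>c. lin_burst n b c \<and> matvec r n H c = z))"

end

theory Submission
  imports Defs "HOL-Library.FuncSet"
begin

lemma funs_eq:
  fixes D :: "nat set" and S :: "nat \<Rightarrow> 'a::zero set"
  shows "{c::nat\<Rightarrow>'a. (\<forall>j. j\<notin>D \<longrightarrow> c j = 0) \<and> (\<forall>j\<in>D. c j \<in> S j)}
     = (\<lambda>w j. if j\<in>D then w j else 0) ` (PiE D S)"
proof (rule set_eqI, rule iffI)
  fix c assume c: "c \<in> {c::nat\<Rightarrow>'a. (\<forall>j. j\<notin>D \<longrightarrow> c j = 0) \<and> (\<forall>j\<in>D. c j \<in> S j)}"
  have "restrict c D \<in> PiE D S" using c by auto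
  moreover have "c = (\<lambda>w j. if j\<in>D then w j else 0) (restrict c D)" using c by (auto simp: fun_eq_iff)
  ultimately show "c \<in> (\<lambda>w j. if j\<in>D then w j else 0) ` (PiE D S)" by blast
next
  fix c assume "c \<in> (\<lambda>w j. if j\<in>D then w j else 0) ` (PiE D S)"
  then show "c \<in> {c::nat\<Rightarrow>'a. (\<forall>j. j\<notin>D \<longrightarrow> c j = 0) \<and> (\<forall>j\<in>D. c j \<in> S j)}" by auto
qed

lemma card_funs:
  fixes D :: "nat set" and S :: "nat \<Rightarrow> 'a::{zero,finite} set"
  assumes "finite D"
  shows "card {c::nat\<Rightarrow>'a. (\<forall>j. j\<notin>D \<longrightarrow> c j = 0) \<and> (\<forall>j\<in>D. c j \<in> S j)} = (\<Prod>j\<in>D. card (S j))"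
    and "finite {c::nat\<Rightarrow>'a. (\<forall>j. j\<notin>D \<longrightarrow> c j = 0) \<and> (\<forall>j\<in>D. c j \<in> S j)}"
proof -
  have inj: "inj_on (\<lambda>w j. if j\<in>D then w j else (0::'a)) (PiE D S)"
  proof (rule inj_onI)
    fix x y assume x: "x \<in> PiE D S" and y: "y \<in> PiE D S"
      and e: "(\<lambda>j. if j\<in>D then x j else (0::'a)) = (\<lambda>j. if j\<in>D then y j else 0)"
    show "x = y"
    proof
      fix j show "x j = y j"
      proof (cases "j \<in> D")
        case True
        have "(if j\<in>D then x j else (0::'a)) = (if j\<in>D then y j else 0)" using e by (rule fun_cong)
        then show ?thesis using True by (simp only: if_True)
      next
        case False then show ?thesis using PiE_arb[OF x False] PiE_arb[OF y False] by (simp only:)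
      qed
    qed
  qed
  show "card {c::nat\<Rightarrow>'a. (\<forall>j. j\<notin>D \<longrightarrow> c j = 0) \<and> (\<forall>j\<in>D. c j \<in> S j)} = (\<Prod>j\<in>D. card (S j))"
    unfolding funs_eq by (simp add: card_image[OF inj] card_PiE assms)
  show "finite {c::nat\<Rightarrow>'a. (\<forall>j. j\<notin>D \<longrightarrow> c j = 0) \<and> (\<forall>j\<in>D. c j \<in> S j)}"
    unfolding funs_eq by (rule finite_imageI, rule finite_PiE[OF assms]) simp
qed

lemma card_T:
  fixes D :: "nat set"
  assumes "finite D" "p \<in> D"
  shows "card {c::nat\<Rightarrow>'a::{zero,finite}. (\<forall>j. j\<notin>D \<longrightarrow> c j = 0) \<and> (\<forall>j\<in>D. c j \<in> (if j = p then -{0} else UNIV))}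
     = (card (UNIV::'a set) - 1) * card (UNIV::'a set) ^ (card D - 1)"
    and "finite {c::nat\<Rightarrow>'a::{zero,finite}. (\<forall>j. j\<notin>D \<longrightarrow> c j = 0) \<and> (\<forall>j\<in>D. c j \<in> (if j = p then -{0} else UNIV))}"
proof -
  have "(\<Prod>j\<in>D. card (if j = p then -{0::'a} else UNIV)) = card (-{0::'a}) * (\<Prod>j\<in>D-{p}. card (if j = p then -{0::'a} else UNIV))"
    by (subst prod.remove[OF assms]) simp_all
  also have "(\<Prod>j\<in>D-{p}. card (if j = p then -{0::'a} else UNIV)) = (\<Prod>j\<in>D-{p}. card (UNIV::'a set))"
    by (rule prod.cong) auto
  also have "\<dots> = card (UNIV::'a set) ^ (card D - 1)" using assms by (simp add: card_Diff_singleton)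
  also have "card (-{0::'a}) = card (UNIV::'a set) - 1"
    by (simp add: Compl_eq_Diff_UNIV card_Diff_subset)
  finally have X: "(\<Prod>j\<in>D. card (if j = p then -{0::'a} else UNIV)) = (card (UNIV::'a set) - 1) * card (UNIV::'a set) ^ (card D - 1)" .
  have "card {c::nat\<Rightarrow>'a::{zero,finite}. (\<forall>j. j\<notin>D \<longrightarrow> c j = 0) \<and> (\<forall>j\<in>D. c j \<in> (if j = p then -{0} else UNIV))} = (\<Prod>j\<in>D. card (if j = p then -{0::'a} else UNIV))"
    by (rule card_funs(1)[OF assms(1)])
  then show "card {c::nat\<Rightarrow>'a::{zero,finite}. (\<forall>j. j\<notin>D \<longrightarrow> c j = 0) \<and> (\<forall>j\<in>D. c j \<in> (if j = p then -{0} else UNIV))}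
     = (card (UNIV::'a set) - 1) * card (UNIV::'a set) ^ (card D - 1)" unfolding X .
  show "finite {c::nat\<Rightarrow>'a::{zero,finite}. (\<forall>j. j\<notin>D \<longrightarrow> c j = 0) \<and> (\<forall>j\<in>D. c j \<in> (if j = p then -{0} else UNIV))}"
    by (rule card_funs(2)[OF assms(1)])
qed

lemma geo_nat: "(q - 1) * (\<Sum>k<e. q ^ k) + 1 = (q::nat) ^ e" if "q \<ge> 1"
proof (induction e)
  case 0 then show ?case by simp
next
  case (Suc e)
  have "(q - 1) * (\<Sum>k<Suc e. q ^ k) + 1 = ((q - 1) * (\<Sum>k<e. q ^ k) + 1) + (q-1) * q^e"
    by (simp add: algebra_simps)
  also have "\<dots> = q^e + (q-1)*q^e" using Suc by simp
  also have "\<dots> = q ^ Suc e" using that by (cases q) auto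
  finally show ?case .
qed

lemma sum_min: 
  fixes q b :: nat assumes "q \<ge> 1" "b \<ge> 1"
  shows "(\<Sum>s<n. (q-1)*q^(min (b-1) s)) + 1 = (if n \<le> b-1 then q^n else (n-b+1)*(q-1)*q^(b-1) + q^(b-1))"
proof (induction n)
  case 0 then show ?case by simp
next
  case (Suc n)
  have q: "(q-1)*q^m + q^m = q^Suc m" for m using assms(1) by (simp add: algebra_simps power_Suc)
  have st: "(\<Sum>s<Suc n. (q-1)*q^(min (b-1) s)) + 1 = ((\<Sum>s<n. (q-1)*q^(min (b-1) s)) + 1) + (q-1)*q^(min (b-1) n)"
    by (simp only: sum.lessThan_Suc add.assoc add.commute)
  show ?case
  proof (cases "Suc n \<le> b - 1")
    case True
    then have c: "n \<le> b - 1" "min (b-1) n = n" by simp_all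
    have "(\<Sum>s<Suc n. (q-1)*q^(min (b-1) s)) + 1 = q^n + (q-1)*q^n"
      unfolding st c(2) Suc.IH[unfolded if_P[OF c(1)]] ..
    then show ?thesis unfolding if_P[OF True] using q[of n] by simp
  next
    case False
    show ?thesis
    proof (cases "n = b - 1")
      case True
      then have c: "n \<le> b - 1" "min (b-1) n = n" "Suc n - b + 1 = 1" using assms by auto
      have "(\<Sum>s<Suc n. (q-1)*q^(min (b-1) s)) + 1 = q^n + (q-1)*q^n"
        unfolding st c(2) Suc.IH[unfolded if_P[OF c(1)]] ..
      then show ?thesis unfolding if_not_P[OF False] c(3) using True by simp
    next
      case F2: False
      have "b \<le> n" using False F2 by arith
      then obtain m where m: "n = b + m" by (auto simp: le_iff_add)
      have mn: "min (b-1) n = b - 1" "Suc n - b + 1 = m + 2" "n - b + 1 = m + 1" "\<not> n \<le> b - 1" using m assms by auto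
      have "(\<Sum>s<Suc n. (q-1)*q^(min (b-1) s)) + 1 = ((m+1)*(q-1)*q^(b-1) + q^(b-1)) + (q-1)*q^(b-1)"
        unfolding st mn(1) Suc.IH[unfolded if_not_P[OF mn(4)] mn(3)] ..
      also have "\<dots> = (m+2)*(q-1)*q^(b-1) + q^(b-1)"
      proof -
        have "(m+1)*X + Y + X = (m+2)*X + Y" for X Y :: nat by simp
        then show ?thesis by (simp only: mult.assoc)
      qed
      finally show ?thesis unfolding if_not_P[OF False] mn(2) .
    qed
  qed
qed


lemma numA:
  fixes q n r b :: nat
  assumes q: "q \<ge> 2" and b: "b \<ge> 2" and n: "n \<ge> 1" and h: "q^r \<le> n*((q-1)*q^(b-1)) + 1"
  shows "real n \<ge> (real q powi (int r - int b + 1) - 1)/(real q - 1) + 1"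
proof (cases "r + 1 \<le> b")
  case True
  define k where "k = b - r - 1"
  have e: "int r - int b + 1 = - int k" using True unfolding k_def by simp
  have "real q ^ k \<ge> 1" using q by simp
  then have "inverse (real q ^ k) \<le> 1" unfolding inverse_le_1_iff by simp
  then have "real q powi (int r - int b + 1) \<le> 1" unfolding e power_int_minus power_int_of_nat .
  then have "(real q powi (int r - int b + 1) - 1)/(real q - 1) \<le> 0"
    using q by (intro divide_nonpos_pos) auto
  then show ?thesis using n by simp
next
  case False
  define e where "e = r - b + 1"
  have ee: "int r - int b + 1 = int e" using False unfolding e_def by simp
  have re: "r = e + (b - 1)" using False b unfolding e_def by simp
  define Q where "Q = q^(b-1)"
  have Q2: "Q \<ge> 2"
  proof -
    have "q^1 \<le> q^(b-1)" by (rule power_increasing) (use b q in auto)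
    then show ?thesis using q unfolding Q_def by simp
  qed
  have qr: "q^r = q^e * Q" unfolding re Q_def by (simp add: power_add)
  have le: "q^e \<le> n*(q-1)"
  proof (rule ccontr)
    assume "\<not> q^e \<le> n*(q-1)"
    then have "n*(q-1) + 1 \<le> q^e" by simp
    then have "(n*(q-1) + 1) * Q \<le> q^e * Q" by (rule mult_right_mono) simp
    then have "n*((q-1)*Q) + Q \<le> q^r" unfolding qr by (simp add: algebra_simps)
    then show False using h Q2 unfolding Q_def by simp
  qed
  define A where "A = (\<Sum>k<e. q ^ k)"
  have gA: "(q - 1) * A + 1 = q ^ e" unfolding A_def using geo_nat[of q e] q by simp
  have le': "q^e \<le> (q-1)*n" using le by (simp only: mult.commute)
  have "(q-1)*A < (q-1)*n" using gA le' by linarith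
  then have An: "A < n" by simp
  have "real ((q - 1) * A + 1) = real (q ^ e)" using gA by simp
  then have "(real q - 1) * real A + 1 = real q ^ e" using q by (simp add: of_nat_diff)
  then have "(real q powi (int r - int b + 1) - 1)/(real q - 1) = real A"
    unfolding ee power_int_of_nat using q by (simp add: field_simps)
  then show ?thesis using An by simp
qed

lemma numB:
  fixes q n r b :: nat
  assumes q: "q \<ge> 2" and b: "b \<ge> 1" and n: "n \<ge> b"
  shows "(real n \<ge> (real q powi (int r - int b + 1) - 1)/(real q - 1) + real b - 1
            \<longleftrightarrow> q^r \<le> (n-b+1)*(q-1)*q^(b-1) + q^(b-1))
       \<and> (real n = (real q powi (int r - int b + 1) - 1)/(real q - 1) + real b - 1
            \<longleftrightarrow> q^r = (n-b+1)*(q-1)*q^(b-1) + q^(b-1))"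
proof -
  define Q where "Q = real q ^ (b-1)"
  define d where "d = real q - 1"
  define m where "m = real n - real b + 1"
  define x where "x = real q ^ r"
  have Qp: "Q > 0" unfolding Q_def using q by simp
  have dp: "d > 0" unfolding d_def using q by simp
  have e2: "int r - int b + 1 = int r - int (b-1)" using b by simp
  have "real q powi (int r - int b + 1) = real q powi (int r) / real q powi (int (b-1))"
    unfolding e2 by (rule power_int_diff) (use q in simp)
  then have pw: "real q powi (int r - int b + 1) = x / Q"
    unfolding Q_def x_def power_int_of_nat .
  have N1: "real ((n-b+1)*(q-1)*q^(b-1) + q^(b-1)) = m * d * Q + Q"
  proof -
    have e1: "real (n-b) = real n - real b" using n by (simp add: of_nat_diff)
    have e2: "real (q-1) = real q - 1" using q by (simp add: of_nat_diff)
    show ?thesis unfolding m_def d_def Q_def by (simp only: of_nat_add of_nat_mult of_nat_power e1 e2 of_nat_1)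
  qed
  have xr: "real (q^r) = x" unfolding x_def by simp
  have i1: "((x/Q - 1)/d + real b - 1 \<le> real n) \<longleftrightarrow> x \<le> m*d*Q + Q"
  proof -
    have "((x/Q - 1)/d + real b - 1 \<le> real n) \<longleftrightarrow> (x/Q - 1)/d \<le> m" unfolding m_def by linarith
    also have "\<dots> \<longleftrightarrow> x/Q - 1 \<le> m * d" using dp by (simp add: pos_divide_le_eq)
    also have "\<dots> \<longleftrightarrow> x/Q \<le> m*d + 1" by linarith
    also have "\<dots> \<longleftrightarrow> x \<le> (m*d+1)*Q" using Qp by (simp add: pos_divide_le_eq)
    finally show ?thesis by (simp add: algebra_simps)
  qed
  have i2: "(real n = (x/Q - 1)/d + real b - 1) \<longleftrightarrow> x = m*d*Q + Q"
  proof -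
    have "(real n = (x/Q - 1)/d + real b - 1) \<longleftrightarrow> (x/Q - 1)/d = m" unfolding m_def by linarith
    also have "\<dots> \<longleftrightarrow> x/Q - 1 = m * d" using dp by (simp add: divide_eq_eq)
    also have "\<dots> \<longleftrightarrow> x/Q = m*d + 1" by linarith
    also have "\<dots> \<longleftrightarrow> x = (m*d+1)*Q" using Qp by (simp add: divide_eq_eq)
    finally show ?thesis by (simp add: algebra_simps)
  qed
  have c1: "(q^r \<le> (n-b+1)*(q-1)*q^(b-1) + q^(b-1)) \<longleftrightarrow> x \<le> m*d*Q + Q"
    by (subst N1[symmetric], subst xr[symmetric], rule of_nat_le_iff[symmetric])
  have c2: "(q^r = (n-b+1)*(q-1)*q^(b-1) + q^(b-1)) \<longleftrightarrow> x = m*d*Q + Q"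
    by (subst N1[symmetric], subst xr[symmetric], rule of_nat_eq_iff[symmetric])
  have dd: "real q - 1 = d" by (simp add: d_def)
  show ?thesis unfolding pw c1 c2 dd i1 i2 by (rule conjI refl)+
qed


lemma mv0: "matvec r n H (\<lambda>_. 0) = (\<lambda>_. 0)"
  by (simp add: matvec_def fun_eq_iff)

lemma mv_vec: "is_vec r (matvec r n H c)"
  by (simp add: is_vec_def matvec_def)

lemma mv_add: "matvec r n H (\<lambda>j. c j + d j) = (\<lambda>i. matvec r n H c i + matvec r n H d i)"
  by (simp add: matvec_def fun_eq_iff distrib_left sum.distrib)

lemma mv_unit:
  fixes H :: "nat \<Rightarrow> nat \<Rightarrow> 'a::comm_semiring_1"
  assumes "j < n"
  shows "matvec r n H (\<lambda>k. if k = j then 1 else 0) = (\<lambda>i. if i < r then H i j else 0)"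
proof -
  have "(\<Sum>k<n. H i k * (if k = j then 1 else 0)) = H i j" for i
  proof -
    have "(\<Sum>k<n. H i k * (if k = j then 1 else 0)) = (\<Sum>k<n. if k = j then H i k else 0)"
      by (rule sum.cong) auto
    also have "\<dots> = H i j" using assms by (simp add: sum.delta)
    finally show ?thesis .
  qed
  then show ?thesis by (simp add: matvec_def fun_eq_iff)
qed

lemma mv_zero_cols:
  assumes "\<forall>j<n. \<forall>i<r. H i j = 0"
  shows "matvec r n H c = (\<lambda>_. 0)"
  using assms by (simp add: matvec_def fun_eq_iff)


lemma q2: "card (UNIV::'a::{finite,field} set) \<ge> 2"
proof -
  have "card {0::'a, 1} = 2" by simp
  moreover have "card {0::'a, 1} \<le> card (UNIV::'a set)" by (rule card_mono) auto
  ultimately show ?thesis by simp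
qed

lemma cardZ:
  shows "card ({z::nat\<Rightarrow>'a::{finite,zero}. is_vec r z} - {\<lambda>_. 0}) = card (UNIV::'a set) ^ r - 1"
    and "finite {z::nat\<Rightarrow>'a::{finite,zero}. is_vec r z}"
    and "card {z::nat\<Rightarrow>'a::{finite,zero}. is_vec r z} = card (UNIV::'a set) ^ r"
proof -
  have eq: "{z::nat\<Rightarrow>'a. is_vec r z} = {c. (\<forall>j. j\<notin>{..<r} \<longrightarrow> c j = 0) \<and> (\<forall>j\<in>{..<r}. c j \<in> (\<lambda>_. UNIV) j)}"
    by (auto simp: is_vec_def not_less)
  show c: "card {z::nat\<Rightarrow>'a::{finite,zero}. is_vec r z} = card (UNIV::'a set) ^ r"
    unfolding eq card_funs(1)[OF finite_lessThan] by simp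
  show f: "finite {z::nat\<Rightarrow>'a::{finite,zero}. is_vec r z}"
    unfolding eq by (rule card_funs(2)[OF finite_lessThan])
  have "(\<lambda>_. 0) \<in> {z::nat\<Rightarrow>'a. is_vec r z}" by (simp add: is_vec_def)
  then show "card ({z::nat\<Rightarrow>'a::{finite,zero}. is_vec r z} - {\<lambda>_. 0}) = card (UNIV::'a set) ^ r - 1"
    using f c by (simp add: card_Diff_singleton)
qed

lemma part_a:
  fixes H :: "nat \<Rightarrow> nat \<Rightarrow> 'a::{finite,field}"
  assumes r: "r \<ge> 1" and b: "b \<ge> 2" and cov: "cyc_burst_covering r n b H"
  shows "real n \<ge> (real (card (UNIV::'a set)) powi (int r - int b + 1) - 1)/(real (card (UNIV::'a set)) - 1) + 1"
proof -
  define q where "q = card (UNIV::'a set)"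
  have q: "q \<ge> 2" unfolding q_def by (rule q2)
  define Zr where "Zr = {z::nat\<Rightarrow>'a. is_vec r z}"
  have "is_vec r (\<lambda>_. 0::'a)" by (simp add: is_vec_def)
  then obtain c0 :: "nat \<Rightarrow> 'a" where "cyc_burst n b c0" using cov unfolding cyc_burst_covering_def by blast
  then have n1: "n \<ge> 1" unfolding cyc_burst_def by auto
  define W where "W i = (\<lambda>k. (i+k) mod n) ` {..<b}" for i
  define T where "T i = {c::nat\<Rightarrow>'a. (\<forall>j. j\<notin>W i \<longrightarrow> c j = 0) \<and> (\<forall>j\<in>W i. c j \<in> (if j = i then -{0} else UNIV))}" for i
  have cT: "card (T i) \<le> (q-1)*q^(b-1)" and fT: "finite (T i)" if i: "i < n" for i
  proof -
    have iW: "i \<in> W i" unfolding W_def using i b by (auto intro!: image_eqI[where x=0])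
    have fW: "finite (W i)" unfolding W_def by simp
    have cW: "card (W i) \<le> b" unfolding W_def using card_image_le[of "{..<b}" "\<lambda>k. (i+k) mod n"] by simp
    have "card (T i) = (q-1)*q^(card (W i) - 1)" unfolding T_def q_def by (rule card_T(1)[OF fW iW])
    also have "\<dots> \<le> (q-1)*q^(b-1)"
      by (rule mult_le_mono2, rule power_increasing) (use q cW in auto)
    finally show "card (T i) \<le> (q-1)*q^(b-1)" .
    show "finite (T i)" unfolding T_def by (rule card_T(2)[OF fW iW])
  qed
  have sub: "Zr - {\<lambda>_. 0} \<subseteq> matvec r n H ` (\<Union>i<n. T i)"
  proof
    fix z assume z: "z \<in> Zr - {\<lambda>_. 0}"
    then obtain c where cb: "cyc_burst n b c" and cz: "matvec r n H c = z"
      using cov unfolding cyc_burst_covering_def Zr_def by blast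
    have "c \<noteq> (\<lambda>_. 0)" using z cz mv0[of r n H] by auto
    then obtain j0 where j0: "c j0 \<noteq> 0" by auto
    obtain i where i: "i < n" and supp: "\<forall>j. c j \<noteq> 0 \<longrightarrow> (\<exists>k<b. j = (i + k) mod n)"
      using cb unfolding cyc_burst_def by blast
    obtain k1 where k1: "k1 < b" "c ((i + k1) mod n) \<noteq> 0" using supp j0 by blast
    define k0 where "k0 = (LEAST k. c ((i + k) mod n) \<noteq> 0)"
    have k0a: "c ((i + k0) mod n) \<noteq> 0" unfolding k0_def by (rule LeastI, rule k1(2))
    have k0b: "k0 \<le> k1" unfolding k0_def by (rule Least_le, rule k1(2))
    have k0c: "c ((i + k) mod n) = 0" if "k < k0" for k using not_less_Least[OF that[unfolded k0_def]] by simp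
    define i' where "i' = (i + k0) mod n"
    have i'n: "i' < n" unfolding i'_def using n1 by simp
    have "c \<in> T i'"
      unfolding T_def
    proof (intro CollectI conjI allI impI ballI)
      fix j assume jW: "j \<notin> W i'"
      show "c j = 0"
      proof (rule ccontr)
        assume cj: "c j \<noteq> 0"
        then obtain k where k: "k < b" "j = (i + k) mod n" using supp by blast
        have "\<not> k < k0" using k0c cj k(2) by blast
        then have ik: "i + k = (i + k0) + (k - k0)" by simp
        have "j = (i' + (k - k0)) mod n" unfolding i'_def k(2) mod_add_left_eq ik[symmetric] ..
        moreover have "k - k0 < b" using k by simp
        ultimately have "j \<in> W i'" unfolding W_def by blast
        then show False using jW by simp
      qed
    next
      fix j assume "j \<in> W i'"
      show "c j \<in> (if j = i' then -{0} else UNIV)" using k0a unfolding i'_def by simp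
    qed
    then show "z \<in> matvec r n H ` (\<Union>i<n. T i)" using i'n cz by blast
  qed
  have fU: "finite (\<Union>i<n. T i)" using fT by blast
  have "card (Zr - {\<lambda>_. 0}) \<le> card (matvec r n H ` (\<Union>i<n. T i))"
    by (rule card_mono[OF finite_imageI[OF fU] sub])
  also have "\<dots> \<le> card (\<Union>i<n. T i)" by (rule card_image_le[OF fU])
  also have "\<dots> \<le> (\<Sum>i<n. card (T i))" by (rule card_UN_le) simp
  also have "\<dots> \<le> (\<Sum>i<n. (q-1)*q^(b-1))" by (rule sum_mono) (use cT in simp)
  also have "\<dots> = n * ((q-1)*q^(b-1))" by simp
  finally have "q^r - 1 \<le> n * ((q-1)*q^(b-1))" unfolding Zr_def q_def cardZ(1) .
  then have "q^r \<le> n * ((q-1)*q^(b-1)) + 1" by simp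
  from numA[OF q b n1 this] show ?thesis unfolding q_def .
qed


lemma noZ:
  fixes H :: "nat \<Rightarrow> nat \<Rightarrow> 'a::{finite,field}"
  assumes r: "r \<ge> 1" and b: "b \<ge> 2" and cov: "lin_burst_covering r n b H"
    and U: "\<forall>z. is_vec r z \<and> z \<noteq> (\<lambda>_. 0) \<longrightarrow> (\<exists>!c. c \<noteq> (\<lambda>_. 0) \<and> lin_burst n b c \<and> matvec r n H c = z)"
    and c0: "c0 \<noteq> (\<lambda>_. 0)" "lin_burst n b c0" "matvec r n H c0 = (\<lambda>_. 0)"
  shows False
proof -
  define zc where "zc j \<longleftrightarrow> (\<forall>i<r. H i j = (0::'a))" for j
  have L: "zc j'" if c: "c \<noteq> (\<lambda>_. 0)" "i + b \<le> n" "\<forall>j. c j \<noteq> 0 \<longrightarrow> i \<le> j \<and> j < i + b"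
      "matvec r n H c = (\<lambda>_. 0)" and j': "i \<le> j'" "j' < i + b" for c i j'
  proof (rule ccontr)
    assume nz: "\<not> zc j'"
    define e :: "nat \<Rightarrow> 'a" where "e = (\<lambda>k. if k = j' then 1 else 0)"
    define z where "z = matvec r n H e"
    have z: "z = (\<lambda>l. if l < r then H l j' else 0)" unfolding z_def e_def
      by (rule mv_unit) (use c j' in simp)
    have zne: "z \<noteq> (\<lambda>_. 0)"
    proof
      assume z0: "z = (\<lambda>_. 0)"
      have "\<forall>l<r. H l j' = 0"
      proof (intro allI impI)
        fix l assume "l < r"
        have "z l = 0" using z0 by simp
        then show "H l j' = 0" using \<open>l < r\<close> unfolding z by simp
      qed
      then show False using nz unfolding zc_def by blast
    qed
    have zv: "is_vec r z" unfolding z_def by (rule mv_vec)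
    define d where "d = (\<lambda>k. e k + c k)"
    have md: "matvec r n H d = z" unfolding d_def mv_add z_def c(4) by simp
    have e1: "e \<noteq> (\<lambda>_. 0)"
    proof
      assume "e = (\<lambda>_. 0)"
      then have "e j' = 0" by simp
      then show False unfolding e_def by simp
    qed
    have d1: "d \<noteq> (\<lambda>_. 0)" using md zne mv0[of r n H] by auto
    have eb: "lin_burst n b e" unfolding lin_burst_def e_def using c(2) j' by (intro exI[of _ i]) auto
    have db: "lin_burst n b d" unfolding lin_burst_def
    proof (intro exI[of _ i] conjI allI impI)
      show "i + b \<le> n" by (rule c(2))
      fix j assume "d j \<noteq> 0"
      then have "e j \<noteq> 0 \<or> c j \<noteq> 0" unfolding d_def by auto
      then show "i \<le> j" "j < i + b" using c(3) j' unfolding e_def by (auto split: if_splits)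
    qed
    have "e \<noteq> d"
    proof
      assume ed: "e = d"
      have "\<forall>k. c k = 0"
      proof
        fix k
        have "e k = d k" using ed by simp
        then show "c k = 0" unfolding d_def by simp
      qed
      then show False using c(1) by auto
    qed
    moreover have "e = d"
    proof -
      have ex: "\<exists>!c. c \<noteq> (\<lambda>_. 0) \<and> lin_burst n b c \<and> matvec r n H c = z"
        using U zv zne by blast
      then obtain c' where c': "\<forall>y. (y \<noteq> (\<lambda>_. 0) \<and> lin_burst n b y \<and> matvec r n H y = z) \<longrightarrow> y = c'"
        unfolding Ex1_def by blast
      have "e = c'" using c' e1 eb z_def by blast
      moreover have "d = c'" using c' d1 db md by blast
      ultimately show ?thesis by simp
    qed
    ultimately show False by simp
  qed
  have nb: "n \<ge> b" using c0(2) unfolding lin_burst_def by auto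
  have nbr: "zc j'" if "zc j" "j < n" "j' < n" "j' \<le> j + 1" "j \<le> j' + 1" for j j'
  proof -
    define i where "i = min (min j j') (n - b)"
    define e :: "nat \<Rightarrow> 'a" where "e = (\<lambda>k. if k = j then 1 else 0)"
    have me: "matvec r n H e = (\<lambda>_. 0)" unfolding e_def mv_unit[OF that(2)] using that(1)
      unfolding zc_def by (auto simp: fun_eq_iff)
    have e1: "e \<noteq> (\<lambda>_. 0)"
    proof
      assume "e = (\<lambda>_. 0)"
      then have "e j = 0" by simp
      then show False unfolding e_def by simp
    qed
    have ib: "i + b \<le> n" unfolding i_def using nb by simp
    have ij: "i \<le> j" "j < i + b" "i \<le> j'" "j' < i + b" unfolding i_def using that b nb by auto
    have "\<forall>k. e k \<noteq> 0 \<longrightarrow> i \<le> k \<and> k < i + b" unfolding e_def using ij by auto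
    from L[OF e1 ib this me ij(3) ij(4)] show ?thesis .
  qed
  obtain i where i: "i + b \<le> n" "\<forall>j. c0 j \<noteq> 0 \<longrightarrow> i \<le> j \<and> j < i + b" using c0(2) unfolding lin_burst_def by blast
  have zi: "zc i" by (rule L[OF c0(1) i c0(3)]) (use b in auto)
  have in': "i < n" using i b by simp
  have down: "\<forall>j. j < n \<longrightarrow> zc j \<longrightarrow> zc 0"
  proof
    fix j show "j < n \<longrightarrow> zc j \<longrightarrow> zc 0"
    proof (induction j)
      case 0 then show ?case by simp
    next
      case (Suc j)
      show ?case
      proof (intro impI)
        assume "Suc j < n" "zc (Suc j)"
        then have "zc j" using nbr[of "Suc j" j] by simp
        then show "zc 0" using Suc.IH \<open>Suc j < n\<close> by simp
      qed
    qed
  qed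
  have z0: "zc 0" using down zi in' by blast
  have up: "\<forall>j. j < n \<longrightarrow> zc j"
  proof
    fix j show "j < n \<longrightarrow> zc j"
    proof (induction j)
      case 0 then show ?case using z0 by simp
    next
      case (Suc j)
      show ?case using Suc.IH nbr[of j "Suc j"] by simp
    qed
  qed
  then have allz: "\<forall>j<n. \<forall>i<r. H i j = 0" unfolding zc_def by blast
  define z :: "nat \<Rightarrow> 'a" where "z = (\<lambda>i. if i = 0 then 1 else 0)"
  have "is_vec r z" unfolding z_def is_vec_def using r by auto
  then obtain c where "matvec r n H c = z" using cov unfolding lin_burst_covering_def by blast
  then have "z = (\<lambda>_. 0)" using mv_zero_cols[OF allz] by simp
  then have "z 0 = 0" by simp
  then show False unfolding z_def by simp
qed


lemma part_b:
  fixes H :: "nat \<Rightarrow> nat \<Rightarrow> 'a::{finite,field}"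
  assumes r: "r \<ge> 1" and b: "b \<ge> 2" and cov: "lin_burst_covering r n b H"
  shows "real n \<ge> (real (card (UNIV :: 'a set)) powi (int r - int b + 1) - 1) / (real (card (UNIV :: 'a set)) - 1) + real b - 1
             \<and> (real n = (real (card (UNIV :: 'a set)) powi (int r - int b + 1) - 1) / (real (card (UNIV :: 'a set)) - 1) + real b - 1
                 \<longleftrightarrow> (\<forall>z. is_vec r z \<and> z \<noteq> (\<lambda>_. 0) \<longrightarrow>
                        (\<exists>!c. c \<noteq> (\<lambda>_. 0) \<and> lin_burst n b c \<and> matvec r n H c = z)))"
proof -
  define q where "q = card (UNIV::'a set)"
  have q: "q \<ge> 2" unfolding q_def by (rule q2)
  define Zr where "Zr = {z::nat\<Rightarrow>'a. is_vec r z}"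
  have fZ: "finite Zr" unfolding Zr_def by (rule cardZ(2))
  have cZ: "card Zr = q^r" unfolding Zr_def q_def by (rule cardZ(3))
  have cZ1: "card (Zr - {\<lambda>_. 0}) = q^r - 1" unfolding Zr_def q_def by (rule cardZ(1))
  have "is_vec r (\<lambda>_. 0::'a)" by (simp add: is_vec_def)
  then obtain c00 :: "nat \<Rightarrow> 'a" where "lin_burst n b c00" using cov unfolding lin_burst_covering_def by blast
  then have nb: "n \<ge> b" unfolding lin_burst_def by auto
  define D where "D p = {p..<min (p+b) n}" for p
  define T where "T p = {c::nat\<Rightarrow>'a. (\<forall>j. j\<notin>D p \<longrightarrow> c j = 0) \<and> (\<forall>j\<in>D p. c j \<in> (if j = p then -{0} else UNIV))}" for p
  define Bs where "Bs = {c::nat\<Rightarrow>'a. c \<noteq> (\<lambda>_. 0) \<and> lin_burst n b c}"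
  have pD: "p \<in> D p" if "p < n" for p unfolding D_def using that b by simp
  have fD: "finite (D p)" for p unfolding D_def by simp
  have cT: "card (T p) = (q-1)*q^(min (p+b) n - p - 1)" and fT: "finite (T p)" if "p < n" for p
  proof -
    have "card (T p) = (q-1)*q^(card (D p) - 1)" unfolding T_def q_def by (rule card_T(1)[OF fD pD[OF that]])
    then show "card (T p) = (q-1)*q^(min (p+b) n - p - 1)" unfolding D_def by simp
    show "finite (T p)" unfolding T_def by (rule card_T(2)[OF fD pD[OF that]])
  qed
  have Bs_eq: "Bs = (\<Union>p<n. T p)"
  proof (rule set_eqI, rule iffI)
    fix c assume "c \<in> Bs"
    then have c1: "c \<noteq> (\<lambda>_. 0)" and "lin_burst n b c" unfolding Bs_def by auto
    then obtain i where i: "i + b \<le> n" "\<forall>j. c j \<noteq> 0 \<longrightarrow> i \<le> j \<and> j < i + b"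
      unfolding lin_burst_def by blast
    obtain j0 where j0: "c j0 \<noteq> 0" using c1 by auto
    define p where "p = (LEAST j. c j \<noteq> 0)"
    have pa: "c p \<noteq> 0" unfolding p_def by (rule LeastI, rule j0)
    have pb: "c j = 0" if "j < p" for j using not_less_Least[OF that[unfolded p_def]] by simp
    have ip: "i \<le> p" "p < i + b" using i(2) pa by auto
    have "c \<in> T p" unfolding T_def
    proof (intro CollectI conjI allI impI ballI)
      fix j assume jD: "j \<notin> D p"
      show "c j = 0"
      proof (rule ccontr)
        assume cj: "c j \<noteq> 0"
        then have "p \<le> j" using pb by (meson not_less)
        moreover have "i \<le> j" "j < i + b" using i(2) cj by auto
        ultimately have "j \<in> D p" unfolding D_def using ip i(1) by simp
        then show False using jD by simp
      qed
    next
      fix j assume "j \<in> D p"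
      show "c j \<in> (if j = p then -{0} else UNIV)" using pa by simp
    qed
    moreover have "p < n" using ip i(1) by simp
    ultimately show "c \<in> (\<Union>p<n. T p)" by blast
  next
    fix c assume "c \<in> (\<Union>p<n. T p)"
    then obtain p where p: "p < n" "c \<in> T p" by blast
    then have cD: "\<forall>j. j\<notin>D p \<longrightarrow> c j = 0" and cp: "c p \<noteq> 0"
      unfolding T_def using pD[OF p(1)] by auto
    have "c \<noteq> (\<lambda>_. 0)" using cp by auto
    moreover have "lin_burst n b c" unfolding lin_burst_def
    proof (intro exI[of _ "min p (n - b)"] conjI allI impI)
      show "min p (n - b) + b \<le> n" using nb by simp
      fix j assume "c j \<noteq> 0"
      then have "j \<in> D p" using cD by blast
      then show "min p (n - b) \<le> j" "j < min p (n - b) + b" unfolding D_def using nb by auto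
    qed
    ultimately show "c \<in> Bs" unfolding Bs_def by blast
  qed
  have disj: "\<forall>p\<in>{..<n}. \<forall>p'\<in>{..<n}. p \<noteq> p' \<longrightarrow> T p \<inter> T p' = {}"
  proof (intro ballI impI)
    fix p p' assume p: "p \<in> {..<n}" and p': "p' \<in> {..<n}" and ne: "p \<noteq> p'"
    show "T p \<inter> T p' = {}"
    proof (rule ccontr)
      assume "T p \<inter> T p' \<noteq> {}"
      then obtain c where c: "c \<in> T p" "c \<in> T p'" by blast
      have "c p \<noteq> 0" using c(1) pD[of p] p unfolding T_def by auto
      then have "p \<in> D p'" using c(2) unfolding T_def by blast
      then have "p' \<le> p" unfolding D_def by simp
      have "c p' \<noteq> 0" using c(2) pD[of p'] p' unfolding T_def by auto
      then have "p' \<in> D p" using c(1) unfolding T_def by blast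
      then have "p \<le> p'" unfolding D_def by simp
      then show False using \<open>p' \<le> p\<close> ne by simp
    qed
  qed
  have fB: "finite Bs" unfolding Bs_eq using fT by blast
  have "card Bs = (\<Sum>p<n. card (T p))" unfolding Bs_eq
    by (rule card_UN_disjoint) (use fT disj in auto)
  also have "\<dots> = (\<Sum>p<n. (q-1)*q^(min (b-1) (n - Suc p)))"
  proof (rule sum.cong)
    fix p assume "p \<in> {..<n}"
    then have "p < n" by simp
    moreover have "min (p+b) n - p - 1 = min (b-1) (n - Suc p)" by (simp add: min_def)
    ultimately show "card (T p) = (q-1)*q^(min (b-1) (n - Suc p))" using cT by simp
  qed simp
  also have "\<dots> = (\<Sum>s<n. (q-1)*q^(min (b-1) s))"
    by (rule sum.nat_diff_reindex)
  finally have cBs: "card Bs = (\<Sum>s<n. (q-1)*q^(min (b-1) s))" .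
  have nle: "\<not> n \<le> b - 1" using nb b by simp
  have q1: "q \<ge> 1" and b1: "b \<ge> 1" using q b by auto
  have cB: "card Bs + 1 = (n-b+1)*(q-1)*q^(b-1) + q^(b-1)"
    unfolding cBs by (rule sum_min[OF q1 b1, of n, unfolded if_not_P[OF nle]])
  have sub: "Zr - {\<lambda>_. 0} \<subseteq> matvec r n H ` Bs"
  proof
    fix z assume z: "z \<in> Zr - {\<lambda>_. 0}"
    then obtain c where cb: "lin_burst n b c" and cz: "matvec r n H c = z"
      using cov unfolding lin_burst_covering_def Zr_def by blast
    have "c \<noteq> (\<lambda>_. 0)" using z cz mv0[of r n H] by auto
    then show "z \<in> matvec r n H ` Bs" using cb cz unfolding Bs_def by blast
  qed
  have img: "matvec r n H ` Bs \<subseteq> Zr" unfolding Zr_def using mv_vec by blast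
  have "q^r - 1 \<le> card Bs"
    using card_mono[OF finite_imageI[OF fB] sub] card_image_le[OF fB, of "matvec r n H"] cZ1 by simp
  then have ineq: "q^r \<le> (n-b+1)*(q-1)*q^(b-1) + q^(b-1)" unfolding cB[symmetric] by arith
  define U where "U = (\<forall>z. is_vec r z \<and> z \<noteq> (\<lambda>_. 0) \<longrightarrow>
                        (\<exists>!c. c \<noteq> (\<lambda>_. (0::'a)) \<and> lin_burst n b c \<and> matvec r n H c = z))"
  have qr1: "q^r \<ge> 1" using q by simp
  have iff: "q^r = (n-b+1)*(q-1)*q^(b-1) + q^(b-1) \<longleftrightarrow> U"
  proof
    assume eq: "q^r = (n-b+1)*(q-1)*q^(b-1) + q^(b-1)"
    then have "card Bs + 1 = q^r" unfolding cB by (rule sym)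
    then have cBe: "card Bs = card (Zr - {\<lambda>_. 0})" unfolding cZ1 by arith
    have ci: "card (matvec r n H ` Bs) = card Bs"
    proof (rule antisym)
      show "card (matvec r n H ` Bs) \<le> card Bs" by (rule card_image_le[OF fB])
      show "card Bs \<le> card (matvec r n H ` Bs)" unfolding cBe
        by (rule card_mono[OF finite_imageI[OF fB] sub])
    qed
    have inj: "inj_on (matvec r n H) Bs" by (rule eq_card_imp_inj_on[OF fB ci])
    have n0: "(\<lambda>_. 0) \<notin> matvec r n H ` Bs"
    proof
      assume "(\<lambda>_. 0) \<in> matvec r n H ` Bs"
      then have "Zr \<subseteq> matvec r n H ` Bs"
      proof -
        assume z0: "(\<lambda>_. 0) \<in> matvec r n H ` Bs"
        show ?thesis
        proof
          fix z assume "z \<in> Zr"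
          show "z \<in> matvec r n H ` Bs"
          proof (cases "z = (\<lambda>_. 0)")
            case True then show ?thesis using z0 by simp
          next
            case False then show ?thesis using sub \<open>z \<in> Zr\<close> by blast
          qed
        qed
      qed
      then have "card Zr \<le> card (matvec r n H ` Bs)" by (rule card_mono[OF finite_imageI[OF fB]])
      then show False using ci cBe cZ cZ1 qr1 by arith
    qed
    show U unfolding U_def
    proof (intro allI impI)
      fix z :: "nat \<Rightarrow> 'a" assume z: "is_vec r z \<and> z \<noteq> (\<lambda>_. 0)"
      then have "z \<in> Zr - {\<lambda>_. 0}" unfolding Zr_def by simp
      then obtain c where c: "c \<in> Bs" "matvec r n H c = z" using sub by blast
      show "\<exists>!c. c \<noteq> (\<lambda>_. 0) \<and> lin_burst n b c \<and> matvec r n H c = z"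
      proof (rule ex1I[of _ c])
        show "c \<noteq> (\<lambda>_. 0) \<and> lin_burst n b c \<and> matvec r n H c = z" using c unfolding Bs_def by simp
        fix c' assume "c' \<noteq> (\<lambda>_. 0) \<and> lin_burst n b c' \<and> matvec r n H c' = z"
        then have "c' \<in> Bs" "matvec r n H c' = matvec r n H c" using c unfolding Bs_def by auto
        then show "c' = c" using inj_onD[OF inj _ _ c(1)] by blast
      qed
    qed
  next
    assume U: U
    have nz: "matvec r n H c \<noteq> (\<lambda>_. 0)" if "c \<in> Bs" for c
    proof
      assume m0: "matvec r n H c = (\<lambda>_. 0)"
      have "c \<noteq> (\<lambda>_. 0)" "lin_burst n b c" using that unfolding Bs_def by auto
      from noZ[OF r b cov U[unfolded U_def] this m0] show False .
    qed
    have ieq: "matvec r n H ` Bs = Zr - {\<lambda>_. 0}"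
    proof
      show "matvec r n H ` Bs \<subseteq> Zr - {\<lambda>_. 0}"
      proof
        fix z assume "z \<in> matvec r n H ` Bs"
        then obtain c where c: "c \<in> Bs" "z = matvec r n H c" by blast
        have "matvec r n H c \<in> Zr" using img c(1) by blast
        then show "z \<in> Zr - {\<lambda>_. 0}" using nz[OF c(1)] c(2) by simp
      qed
    qed (rule sub)
    have inj: "inj_on (matvec r n H) Bs"
    proof (rule inj_onI)
      fix c c' assume c: "c \<in> Bs" and c': "c' \<in> Bs" and e: "matvec r n H c = matvec r n H c'"
      define z where "z = matvec r n H c"
      have "is_vec r z \<and> z \<noteq> (\<lambda>_. 0)" unfolding z_def using mv_vec nz[OF c] by blast
      then have ex: "\<exists>!c. c \<noteq> (\<lambda>_. 0) \<and> lin_burst n b c \<and> matvec r n H c = z"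
        by (rule U[unfolded U_def, rule_format])
      then obtain c0 where c0: "\<forall>y. (y \<noteq> (\<lambda>_. 0) \<and> lin_burst n b y \<and> matvec r n H y = z) \<longrightarrow> y = c0"
        unfolding Ex1_def by blast
      have "c \<noteq> (\<lambda>_. 0) \<and> lin_burst n b c \<and> matvec r n H c = z" using c unfolding Bs_def z_def by simp
      then have "c = c0" using c0 by blast
      moreover have "c' \<noteq> (\<lambda>_. 0) \<and> lin_burst n b c' \<and> matvec r n H c' = z" using c' e unfolding Bs_def z_def by simp
      then have "c' = c0" using c0 by blast
      ultimately show "c = c'" by simp
    qed
    have "card Bs = card (Zr - {\<lambda>_. 0})" using card_image[OF inj] ieq by simp
    then have "card Bs + 1 = q^r" unfolding cZ1 using qr1 by arith
    then show "q^r = (n-b+1)*(q-1)*q^(b-1) + q^(b-1)" unfolding cB by simp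
  qed
  have nm: "(real n \<ge> (real q powi (int r - int b + 1) - 1)/(real q - 1) + real b - 1
            \<longleftrightarrow> q^r \<le> (n-b+1)*(q-1)*q^(b-1) + q^(b-1))
       \<and> (real n = (real q powi (int r - int b + 1) - 1)/(real q - 1) + real b - 1
            \<longleftrightarrow> q^r = (n-b+1)*(q-1)*q^(b-1) + q^(b-1))"
    by (rule numB) (use q b nb in auto)
  have g1: "real n \<ge> (real q powi (int r - int b + 1) - 1)/(real q - 1) + real b - 1"
    using nm ineq by blast
  have g2: "(real n = (real q powi (int r - int b + 1) - 1)/(real q - 1) + real b - 1) \<longleftrightarrow> U"
    using nm iff by blast
  show ?thesis unfolding q_def[symmetric] U_def[symmetric] by (intro conjI g1 g2)
qed

theorem theorem7:
  fixes H :: "nat \<Rightarrow> nat \<Rightarrow> 'a::{finite,field}"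
    and n r b :: nat
  assumes "r \<ge> 1" and "b \<ge> 2"
    and "full_rank r n H"
  shows "(cyc_burst_covering r n b H \<longrightarrow>
            real n \<ge> (real (card (UNIV :: 'a set)) powi (int r - int b + 1) - 1) / (real (card (UNIV :: 'a set)) - 1) + 1)
       \<and> (lin_burst_covering r n b H \<longrightarrow>
            (real n \<ge> (real (card (UNIV :: 'a set)) powi (int r - int b + 1) - 1) / (real (card (UNIV :: 'a set)) - 1) + real b - 1
             \<and> (real n = (real (card (UNIV :: 'a set)) powi (int r - int b + 1) - 1) / (real (card (UNIV :: 'a set)) - 1) + real b - 1
                 \<longleftrightarrow> (\<forall>z. is_vec r z \<and> z \<noteq> (\<lambda>_. 0) \<longrightarrow>
                        (\<exists>!c. c \<noteq> (\<lambda>_. 0) \<and> lin_burst n b c \<and> matvec r n H c = z)))))"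
  apply (rule conjI)
   apply (rule impI)
   apply (erule part_a[OF assms(1,2)])
  apply (rule impI)
  apply (erule part_b[OF assms(1,2)])
  done

end
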